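(* Let $B_0,B_1,\dots,B_{p-1}$ be $p$-dimensional subspaces of $\mathcal M_p(\mathbb C)$, mutually orthogonal for the Hilbert–Schmidt inner product, with $B_0$ the subspace of all diagonal matrices. Let $J_c$ be the passage matrix of a cycle $c$ of maximal length. Then $J_cB_l=B_{l+1}$ for all $0\le l\le p-1$ (with $l+1$ taken mod $p$) if and only if $B_l=\mathrm{span}\{|e_{c(k)}\rangle\langle e_{c(k+l)}|:k=0,1,\dots,p-1\}$ for all $0\le l\le p-1$, where indices are taken mod $p$.
   Context: $\{e_j\}$ canonical basis of $\mathbb C^p$; Hilbert–Schmidt inner product $\langle a,b\rangle=\mathrm{tr}(a^*b)$; $J_cB_l=\{J_cx:x\in B_l\}$. A cycle of maximal length is an ordered sequence $c=(c(0),\dots,c(p-1))$ of the $p$ distinct elements of $\{0,\dots,p-1\}$ (up to cyclic permutation), with passage matrix $J_c=\sum_{i=0}^{p-1}|e_{c(i)}\rangle\langle e_{c(i+1)}|$ (indices mod $p$). *)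

theory Defs
  imports "HOL-Analysis.Analysis"
begin

text \<open>Complex p x p matrices are modelled as complex^'n^'n with p = CARD('n).
  The complex scalar multiplication on matrices:\<close>
definition mscale :: "complex \<Rightarrow> complex^'n^'n \<Rightarrow> complex^'n^'n" where
  "mscale c A = (\<chi> i j. c * A $ i $ j)"

interpretation mat: vector_space "mscale :: complex \<Rightarrow> complex^'n^'n \<Rightarrow> complex^'n^'n"
  by unfold_locales (auto simp: mscale_def vec_eq_iff algebra_simps)

definition hs_inner :: "complex^'n^'n \<Rightarrow> complex^'n^'n \<Rightarrow> complex" where
  "hs_inner a b = (\<Sum>i\<in>UNIV. \<Sum>j\<in>UNIV. cnj (a $ i $ j) * b $ i $ j)"

definition ketbra :: "'n \<Rightarrow> 'n \<Rightarrow> complex^'n^'n" where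
  "ketbra a b = (\<chi> i j. if i = a \<and> j = b then 1 else 0)"

text \<open>A cycle of maximal length: an enumeration c(0),...,c(p-1) of all basis indices.\<close>
definition max_cycle :: "(nat \<Rightarrow> 'n::finite) \<Rightarrow> bool" where
  "max_cycle c \<longleftrightarrow> bij_betw c {..<CARD('n)} UNIV"

definition passage :: "(nat \<Rightarrow> 'n::finite) \<Rightarrow> complex^'n^'n" where
  "passage c = (\<Sum>i<CARD('n). ketbra (c i) (c ((i + 1) mod CARD('n))))"

definition diag_matrices :: "(complex^'n^'n) set" where
  "diag_matrices = {A. \<forall>i j. i \<noteq> j \<longrightarrow> A $ i $ j = 0}"

end

theory Submission imports Defs begin

lemma sum_mmult: "(sum f I ** (X::'a::comm_semiring_1^'n::finite^'n)) = (\<Sum>m\<in>I. f m ** X)"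
proof -
  have "(sum f I ** X) $ i $ j = (\<Sum>m\<in>I. f m ** X) $ i $ j" for i j
  proof -
    have "(sum f I ** X) $ i $ j = (\<Sum>k\<in>UNIV. \<Sum>m\<in>I. f m $ i $ k * X $ k $ j)"
      by (simp add: matrix_matrix_mult_def sum_distrib_right)
    also have "\<dots> = (\<Sum>m\<in>I. \<Sum>k\<in>UNIV. f m $ i $ k * X $ k $ j)"
      by (rule sum.swap)
    also have "\<dots> = (\<Sum>m\<in>I. f m ** X) $ i $ j"
      by (simp add: matrix_matrix_mult_def)
    finally show ?thesis .
  qed
  then show ?thesis by (simp add: vec_eq_iff)
qed

lemma ketbra_mult: "ketbra a b ** ketbra d e = (if b = d then ketbra a e else (0::complex^'n::finite^'n))"
proof -
  have "(ketbra a b ** ketbra d e) $ i $ j = (if b = d then ketbra a e else 0) $ i $ j" for i j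
  proof -
    have "(ketbra a b ** ketbra d e) $ i $ j = (\<Sum>k\<in>UNIV. if k = b then (if i = a \<and> b = d \<and> j = e then 1 else 0) else (0::complex))"
      unfolding matrix_matrix_mult_def ketbra_def vec_lambda_beta by (intro sum.cong) auto
    also have "\<dots> = (if i = a \<and> b = d \<and> j = e then 1 else 0)" by simp
    finally show ?thesis by (simp add: ketbra_def)
  qed
  then show ?thesis by (simp add: vec_eq_iff)
qed

lemma pm: "k < (p::nat) \<Longrightarrow> (k + p - 1) mod p = (if k = 0 then p - 1 else k - 1)"
proof (cases k)
  case 0 assume "k < p" then show ?thesis using 0 by simp
next
  case (Suc k') assume k: "k < p"
  have "k + p - 1 = k' + p" using Suc by simp
  then have "(k + p - 1) mod p = k' mod p" by simp
  also have "\<dots> = k'" using k Suc by simp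
  finally show ?thesis using Suc by simp
qed
lemma mod_pred: assumes i: "i < (p::nat)" and k: "k < p"
  shows "((i+1) mod p = k) = (i = (k+p-1) mod p)"
proof (cases "i + 1 < p")
  case True
  then have "(i+1) mod p = i + 1" by simp
  then show ?thesis using pm[OF k] True by auto
next
  case False
  then have "i + 1 = p" using i by simp
  then have "(i+1) mod p = 0" by simp
  then show ?thesis using pm[OF k] i k \<open>i + 1 = p\<close> by auto
qed

lemma passage_ketbra:
  fixes c :: "nat \<Rightarrow> 'n::finite"
  assumes cyc: "max_cycle c" and k: "k < CARD('n)"
  shows "passage c ** ketbra (c k) b = ketbra (c ((k + CARD('n) - 1) mod CARD('n))) b"
proof -
  let ?p = "CARD('n)"
  have inj: "inj_on c {..<?p}" using cyc unfolding max_cycle_def bij_betw_def by blast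
  have eq: "(c ((i + 1) mod ?p) = c k) = (i = (k + ?p - 1) mod ?p)" if i: "i < ?p" for i
  proof -
    have "(c ((i + 1) mod ?p) = c k) = ((i + 1) mod ?p = k)"
    proof -
      have p0: "0 < ?p" by simp
      have "(i + 1) mod ?p \<in> {..<?p}" using p0 by simp
      moreover have "k \<in> {..<?p}" using k by simp
      ultimately show ?thesis using inj_on_eq_iff[OF inj] by blast
    qed
    also have "\<dots> = (i = (k + ?p - 1) mod ?p)" by (rule mod_pred[OF i k])
    finally show ?thesis .
  qed
  have "passage c ** ketbra (c k) b = (\<Sum>i<?p. if c ((i + 1) mod ?p) = c k then ketbra (c i) b else 0)"
    unfolding passage_def sum_mmult ketbra_mult by simp
  also have "\<dots> = (\<Sum>i<?p. if i = (k + ?p - 1) mod ?p then ketbra (c i) b else 0)"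
  proof (rule sum.cong[OF refl])
    fix i assume "i \<in> {..<?p}"
    then have "i < ?p" by simp
    show "(if c ((i + 1) mod ?p) = c k then ketbra (c i) b else 0) =
          (if i = (k + ?p - 1) mod ?p then ketbra (c i) b else 0)"
      by (simp only: eq[OF \<open>i < ?p\<close>])
  qed
  also have "\<dots> = ketbra (c ((k + CARD('n) - 1) mod CARD('n))) b"
    by (simp add: sum.delta')
  finally show ?thesis .
qed


lemma mm2: "0 < (p::nat) \<Longrightarrow> ((k + p - 1) mod p + (l + 1) mod p) mod p = (k + l) mod p"
proof -
  assume p: "0 < p"
  have "((k + p - 1) mod p + (l + 1) mod p) mod p = (k + p - 1 + (l + 1)) mod p"
    by (simp only: mod_add_left_eq mod_add_right_eq)
  also have "k + p - 1 + (l + 1) = (k + l) + p" using p by simp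
  also have "((k + l) + p) mod p = (k + l) mod p" by simp
  finally show ?thesis .
qed

lemma mm3: "0 < (p::nat) \<Longrightarrow> ((k + 1) mod p + l) mod p = (k + (l + 1) mod p) mod p"
  by (simp add: mod_simps add.assoc add.commute add.left_commute)

lemma passage_hom: "module_hom mscale mscale (\<lambda>x. passage c ** (x::complex^'n::finite^'n))"
  unfolding module_hom_iff
proof (intro conjI allI)
  show "module (mscale :: complex \<Rightarrow> complex^'n^'n \<Rightarrow> _)" by unfold_locales
  show "module (mscale :: complex \<Rightarrow> complex^'n^'n \<Rightarrow> _)" by unfold_locales
  fix x y :: "complex^'n^'n"
  show "passage c ** (x + y) = passage c ** x + passage c ** y"
    by (rule matrix_add_ldistrib)
next
  fix a :: complex and x :: "complex^'n^'n"
  show "passage c ** mscale a x = mscale a (passage c ** x)"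
    by (simp add: vec_eq_iff matrix_matrix_mult_def mscale_def sum_distrib_left algebra_simps)
qed

definition SS :: "(nat \<Rightarrow> 'n::finite) \<Rightarrow> nat \<Rightarrow> (complex^'n^'n) set" where
  "SS c l = {ketbra (c k) (c ((k + l) mod CARD('n))) | k. k < CARD('n)}"

lemma image_SS:
  fixes c :: "nat \<Rightarrow> 'n::finite"
  assumes cyc: "max_cycle c"
  shows "(\<lambda>x. passage c ** x) ` SS c l = SS c ((l + 1) mod CARD('n))"
proof -
  let ?p = "CARD('n)"
  have p: "0 < ?p" by simp
  show ?thesis
  proof
    show "(\<lambda>x. passage c ** x) ` SS c l \<subseteq> SS c ((l + 1) mod ?p)"
    proof
      fix y assume "y \<in> (\<lambda>x. passage c ** x) ` SS c l"
      then obtain k where k: "k < ?p" and y: "y = passage c ** ketbra (c k) (c ((k + l) mod ?p))"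
        unfolding SS_def by blast
      define k' where "k' = (k + ?p - 1) mod ?p"
      have k'p: "k' < ?p" unfolding k'_def using p by simp
      have "y = ketbra (c k') (c ((k + l) mod ?p))"
        using y passage_ketbra[OF cyc k] unfolding k'_def by simp
      also have "(k + l) mod ?p = (k' + (l + 1) mod ?p) mod ?p"
        unfolding k'_def using mm2[OF p, of k l] by simp
      finally show "y \<in> SS c ((l + 1) mod ?p)" unfolding SS_def using k'p by blast
    qed
  next
    show "SS c ((l + 1) mod ?p) \<subseteq> (\<lambda>x. passage c ** x) ` SS c l"
    proof
      fix y assume "y \<in> SS c ((l + 1) mod ?p)"
      then obtain k where k: "k < ?p" and y: "y = ketbra (c k) (c ((k + (l + 1) mod ?p) mod ?p))"
        unfolding SS_def by blast
      define k0 where "k0 = (k + 1) mod ?p"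
      have k0p: "k0 < ?p" unfolding k0_def using p by simp
      have "k = (k0 + ?p - 1) mod ?p"
        using mod_pred[OF k k0p] unfolding k0_def by simp
      then have eqA: "passage c ** ketbra (c k0) (c ((k0 + l) mod ?p)) = ketbra (c k) (c ((k0 + l) mod ?p))"
        using passage_ketbra[OF cyc k0p] by simp
      have eqB: "(k0 + l) mod ?p = (k + (l + 1) mod ?p) mod ?p"
        unfolding k0_def by (rule mm3[OF p])
      have "y = ketbra (c k) (c ((k0 + l) mod ?p))"
        by (simp only: y eqB)
      then have "y = passage c ** ketbra (c k0) (c ((k0 + l) mod ?p))"
        using eqA by simp
      moreover have "ketbra (c k0) (c ((k0 + l) mod ?p)) \<in> SS c l" unfolding SS_def using k0p by blast
      ultimately show "y \<in> (\<lambda>x. passage c ** x) ` SS c l" by blast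
    qed
  qed
qed

lemma span_image_passage:
  "(\<lambda>x. passage c ** x) ` mat.span X = mat.span ((\<lambda>x. passage c ** x) ` (X :: (complex^'n::finite^'n) set))"
  using module_hom.span_image[OF passage_hom[of c], of X] by simp

lemma mult_if01: "(a::complex) * (if P then 1 else 0) = (if P then a else 0)" by simp

lemma diag_span:
  fixes c :: "nat \<Rightarrow> 'n::finite"
  assumes cyc: "max_cycle c"
  shows "diag_matrices = mat.span (SS c 0)"
proof
  let ?p = "CARD('n)"
  have sub: "mat.subspace (diag_matrices :: (complex^'n^'n) set)"
    unfolding mat.subspace_def diag_matrices_def by (auto simp: mscale_def)
  have "SS c 0 \<subseteq> diag_matrices"
    unfolding SS_def diag_matrices_def by (auto simp: ketbra_def)
  then show "mat.span (SS c 0) \<subseteq> diag_matrices" using mat.span_minimal sub by blast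
  show "diag_matrices \<subseteq> mat.span (SS c 0)"
  proof
    fix A :: "complex^'n^'n" assume A: "A \<in> diag_matrices"
    have bij: "bij_betw c {..<?p} UNIV" using cyc unfolding max_cycle_def .
    have "A = (\<Sum>k<?p. mscale (A $ c k $ c k) (ketbra (c k) (c k)))"
    proof -
      have "A $ i $ j = (\<Sum>k<?p. mscale (A $ c k $ c k) (ketbra (c k) (c k))) $ i $ j" for i j
      proof -
        have "(\<Sum>k<?p. mscale (A $ c k $ c k) (ketbra (c k) (c k))) $ i $ j
            = (\<Sum>k<?p. (\<lambda>x. A $ x $ x * (if i = x \<and> j = x then 1 else 0)) (c k))"
          by (simp add: mscale_def ketbra_def)
        also have "\<dots> = (\<Sum>x\<in>UNIV. A $ x $ x * (if i = x \<and> j = x then 1 else 0))"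
          by (rule sum.reindex_bij_betw[OF bij])
        also have "\<dots> = (if i = j then A $ i $ i else 0)"
        proof -
        have eqf: "(\<lambda>x. A $ x $ x * (if i = x \<and> j = x then 1 else 0)) =
              (\<lambda>x. if x = i then (if i = j then A $ i $ i else 0) else 0)"
          by (rule ext) simp
        have s: "(\<Sum>x\<in>UNIV. if x = i then (if i = j then A $ i $ i else 0) else 0) = (if i = j then A $ i $ i else (0::complex))"
          by (rule trans[OF sum.delta[OF finite_class.finite_UNIV]]) (simp only: UNIV_I if_True)
        show ?thesis unfolding eqf by (rule s)
      qed
        also have "\<dots> = A $ i $ j" using A unfolding diag_matrices_def by (cases "i = j") simp_all
        finally show ?thesis by simp
      qed
      then show ?thesis unfolding vec_eq_iff by blast
    qed
    also have "\<dots> \<in> mat.span (SS c 0)"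
    proof (rule mat.span_sum)
      fix k assume "k \<in> {..<?p}"
      then have kp: "k < ?p" by simp
      then have "(k + 0) mod ?p = k" by simp
      then have "ketbra (c k) (c k) = ketbra (c k) (c ((k + 0) mod ?p))" by simp
      then have "ketbra (c k) (c k) \<in> SS c 0" unfolding SS_def using kp by blast
      then show "mscale (A $ c k $ c k) (ketbra (c k) (c k)) \<in> mat.span (SS c 0)"
        by (intro mat.span_scale mat.span_base)
    qed
    finally show "A \<in> mat.span (SS c 0)" .
  qed
qed

theorem mainTheorem8:
  fixes B :: "nat \<Rightarrow> (complex^'n::finite^'n) set"
    and c :: "nat \<Rightarrow> 'n"
  assumes subsp: "\<And>l. l < CARD('n) \<Longrightarrow> mat.subspace (B l)"
    and dims: "\<And>l. l < CARD('n) \<Longrightarrow> mat.dim (B l) = CARD('n)"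
    and orth: "\<And>l m x y. l < CARD('n) \<Longrightarrow> m < CARD('n) \<Longrightarrow> l \<noteq> m \<Longrightarrow>
                 x \<in> B l \<Longrightarrow> y \<in> B m \<Longrightarrow> hs_inner x y = 0"
    and B0: "B 0 = diag_matrices"
    and cyc: "max_cycle c"
  shows "(\<forall>l < CARD('n). (\<lambda>x. passage c ** x) ` B l = B ((l + 1) mod CARD('n)))
     \<longleftrightarrow> (\<forall>l < CARD('n). B l = mat.span {ketbra (c k) (c ((k + l) mod CARD('n))) | k. k < CARD('n)})"
proof -
  let ?p = "CARD('n)"
  let ?f = "\<lambda>x. passage c ** x"
  have key: "?f ` mat.span (SS c l) = mat.span (SS c ((l + 1) mod ?p))" for l
    by (simp add: span_image_passage image_SS[OF cyc])
  have "(\<forall>l < ?p. ?f ` B l = B ((l + 1) mod ?p)) \<longleftrightarrow> (\<forall>l < ?p. B l = mat.span (SS c l))"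
  proof
    assume H: "\<forall>l < ?p. ?f ` B l = B ((l + 1) mod ?p)"
    show "\<forall>l < ?p. B l = mat.span (SS c l)"
    proof (intro allI impI)
      fix l assume "l < ?p"
      then show "B l = mat.span (SS c l)"
      proof (induction l)
        case 0 then show ?case using B0 diag_span[OF cyc] by simp
      next
        case (Suc l)
        then have l: "l < ?p" by simp
        have "B (Suc l) = B ((l + 1) mod ?p)" using Suc.prems by simp
        also have "\<dots> = ?f ` B l" using H l by simp
        also have "\<dots> = mat.span (SS c ((l + 1) mod ?p))" using Suc.IH[OF l] key by simp
        also have "(l + 1) mod ?p = Suc l" using Suc.prems by simp
        finally show ?case .
      qed
    qed
  next
    assume H: "\<forall>l < ?p. B l = mat.span (SS c l)"
    show "\<forall>l < ?p. ?f ` B l = B ((l + 1) mod ?p)"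
    proof (intro allI impI)
      fix l assume l: "l < ?p"
      have l1: "(l + 1) mod ?p < ?p" by simp
      show "?f ` B l = B ((l + 1) mod ?p)"
        using H l l1 key by simp
    qed
  qed
  then show ?thesis unfolding SS_def .
qed

end
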